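(* Let $h\in\mathbb N$, $u,v\in\mathfrak S_n$, and let $F$ be an $h$-flipclass of paths from $u$ to $v$. Then every vertex $(x,i)$ of $TS_F$ with $i>1$ has in-degree at least $2$ in $TS_F$, and every vertex $(x,i)$ of $TS_F$ with $i<h-1$ has out-degree at least $2$ in $TS_F$.
   Context: $\mathfrak S_n$ is the symmetric group on $[n]$, $T$ its transpositions, $\ell$ the length w.r.t. simple transpositions. The Bruhat graph $B(\mathfrak S_n)$ has an edge $x\xrightarrow{t}y$ iff $yx^{-1}=t\in T$ and $\ell(x)<\ell(y)$; $P_h(u,v)$ is the set of paths $u=x_0\to\cdots\to x_h=v$ of length $h$. Between two fixed vertices there are $0$ or $2$ paths of length $2$, each the flip of the other; the $i$-th flip operator $f_i$ ($i\in[h-1]$) on $P_h(u,v)$ replaces $x_{i-1}\to x_i\to x_{i+1}$ by its flip; the orbits of $\langle f_1,\dots,f_{h-1}\rangle$ on $P_h(u,v)$ are the $h$-flipclasses of paths from $u$ to $v$. The time-support graph $TS_F$ of such $F$ has vertices $(a,i)$ ($0\le i\le h$) such that some path $(x_0,\dots,x_h)\in F$ has $x_i=a$, and edges $(a,i)\xrightarrow{t}(b,i+1)$ whenever some path of $F$ contains the edge $x_i=a\xrightarrow{t}b=x_{i+1}$. *)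

theory Defs
  imports "HOL-Combinatorics.Combinatorics"
begin

definition Sym :: "nat \<Rightarrow> (nat \<Rightarrow> nat) set" where
  "Sym n = {x. x permutes {1..n}}"

definition Transp :: "nat \<Rightarrow> (nat \<Rightarrow> nat) set" where
  "Transp n = {transpose a b | a b. a \<in> {1..n} \<and> b \<in> {1..n} \<and> a \<noteq> b}"

definition coxlen :: "nat \<Rightarrow> (nat \<Rightarrow> nat) \<Rightarrow> nat" where
  "coxlen n x = (LEAST k. \<exists>ws. length ws = k \<and> set ws \<subseteq> {1..<n} \<and>
       x = foldr (\<lambda>i f. transpose i (Suc i) \<circ> f) ws id)"

definition bedge :: "nat \<Rightarrow> (nat \<Rightarrow> nat) \<Rightarrow> (nat \<Rightarrow> nat) \<Rightarrow> (nat \<Rightarrow> nat) \<Rightarrow> bool" where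
  "bedge n x t y \<longleftrightarrow> x \<in> Sym n \<and> y \<in> Sym n \<and> t \<in> Transp n \<and> y \<circ> inv x = t
      \<and> coxlen n x < coxlen n y"

definition bedge' :: "nat \<Rightarrow> (nat \<Rightarrow> nat) \<Rightarrow> (nat \<Rightarrow> nat) \<Rightarrow> bool" where
  "bedge' n x y \<longleftrightarrow> (\<exists>t. bedge n x t y)"

definition paths :: "nat \<Rightarrow> nat \<Rightarrow> (nat \<Rightarrow> nat) \<Rightarrow> (nat \<Rightarrow> nat) \<Rightarrow> (nat \<Rightarrow> nat) list set" where
  "paths n h u v = {p. length p = Suc h \<and> p ! 0 = u \<and> p ! h = v \<and>
       (\<forall>i<h. bedge' n (p ! i) (p ! Suc i))}"

definition flip_mid :: "nat \<Rightarrow> (nat \<Rightarrow> nat) \<Rightarrow> (nat \<Rightarrow> nat) \<Rightarrow> (nat \<Rightarrow> nat) \<Rightarrow> (nat \<Rightarrow> nat)" where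
  "flip_mid n x y z = (THE y'. y' \<noteq> y \<and> bedge' n x y' \<and> bedge' n y' z)"

definition flip_op :: "nat \<Rightarrow> nat \<Rightarrow> (nat \<Rightarrow> nat) list \<Rightarrow> (nat \<Rightarrow> nat) list" where
  "flip_op n i p = p[i := flip_mid n (p ! (i - 1)) (p ! i) (p ! Suc i)]"

definition flip_step :: "nat \<Rightarrow> nat \<Rightarrow> (nat \<Rightarrow> nat) list \<Rightarrow> (nat \<Rightarrow> nat) list \<Rightarrow> bool" where
  "flip_step n h p q \<longleftrightarrow> (\<exists>i\<in>{1..h-1}. q = flip_op n i p)"

text \<open>h-flipclasses: orbits of <f_1,...,f_{h-1}> on P_h(u,v). Since each f_i is an
  involution of P_h(u,v), the orbit of p is its class under the reflexive transitive
  closure of single flips.\<close>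
definition flipclasses :: "nat \<Rightarrow> nat \<Rightarrow> (nat \<Rightarrow> nat) \<Rightarrow> (nat \<Rightarrow> nat) \<Rightarrow> (nat \<Rightarrow> nat) list set set" where
  "flipclasses n h u v = {{q. (flip_step n h)\<^sup>*\<^sup>* p q} | p. p \<in> paths n h u v}"

definition TS_vertices :: "nat \<Rightarrow> (nat \<Rightarrow> nat) list set \<Rightarrow> ((nat \<Rightarrow> nat) \<times> nat) set" where
  "TS_vertices h F = {(a, i) | a i. i \<le> h \<and> (\<exists>p\<in>F. p ! i = a)}"

definition TS_edges :: "nat \<Rightarrow> (nat \<Rightarrow> nat) list set \<Rightarrow>
    (((nat \<Rightarrow> nat) \<times> nat) \<times> (nat \<Rightarrow> nat) \<times> ((nat \<Rightarrow> nat) \<times> nat)) set" where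
  "TS_edges h F = {((a, i), t, (b, Suc i)) | a b t i. i < h \<and>
       (\<exists>p\<in>F. p ! i = a \<and> p ! Suc i = b \<and> t = b \<circ> inv a)}"

definition TS_indeg :: "nat \<Rightarrow> (nat \<Rightarrow> nat) list set \<Rightarrow> (nat \<Rightarrow> nat) \<times> nat \<Rightarrow> nat" where
  "TS_indeg h F w = card {e \<in> TS_edges h F. snd (snd e) = w}"

definition TS_outdeg :: "nat \<Rightarrow> (nat \<Rightarrow> nat) list set \<Rightarrow> (nat \<Rightarrow> nat) \<times> nat \<Rightarrow> nat" where
  "TS_outdeg h F w = card {e \<in> TS_edges h F. fst e = w}"

end

theory Submission
  imports Defs
begin

definition invs :: "nat \<Rightarrow> (nat \<Rightarrow> nat) \<Rightarrow> (nat \<times> nat) set" where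
  "invs n g = {(i,j). i \<in> {1..n} \<and> j \<in> {1..n} \<and> i < j \<and> g j < g i}"

definition ninv :: "nat \<Rightarrow> (nat \<Rightarrow> nat) \<Rightarrow> nat" where
  "ninv n g = card (invs n g)"

lemma finite_invs: "finite (invs n g)"
  by (rule finite_subset[of _ "{1..n} \<times> {1..n}"]) (auto simp: invs_def)

lemma gen_swap:
  assumes g: "g permutes {1..n}" and pq: "1 \<le> p" "p < q" "q \<le> n" and lt: "g p < g q"
  shows "ninv n g < ninv n (g \<circ> transpose p q)"
proof -
  let ?t = "transpose p q"
  define f where "f = (\<lambda>(i::nat,j::nat). if (p < i \<and> i < q) \<or> (p < j \<and> j < q) then (i,j) else (?t i, ?t j))"
  have inj: "inj g" using g by (rule permutes_inj)
  have ff: "f (f v) = v" for v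
    apply (cases v) apply (auto simp: f_def transpose_def) done
  have injf: "inj_on f (invs n g)"
    by (metis ff inj_on_inverseI)
  have sub: "f ` invs n g \<subseteq> invs n (g \<circ> ?t) - {(p,q)}"
  proof
    fix v assume "v \<in> f ` invs n g"
    then obtain i j where ij: "(i,j) \<in> invs n g" and v: "v = f (i,j)" by auto
    have gne: "\<And>a b. a \<noteq> b \<Longrightarrow> g a \<noteq> g b" using inj by (meson injD)
    from ij have A: "1 \<le> i" "i < j" "j \<le> n" "g j < g i" by (auto simp: invs_def)
    show "v \<in> invs n (g \<circ> ?t) - {(p,q)}"
      using A pq lt gne[of i p] gne[of i q] gne[of j p] gne[of j q]
      unfolding v f_def invs_def
      by (auto simp: transpose_def split: if_splits)
  qed
  have pqin: "(p,q) \<in> invs n (g \<circ> ?t)" using pq lt by (auto simp: invs_def)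
  have "ninv n g = card (f ` invs n g)" unfolding ninv_def using injf by (simp add: card_image)
  also have "\<dots> \<le> card (invs n (g \<circ> ?t) - {(p,q)})"
    by (rule card_mono[OF _ sub]) (simp add: finite_invs)
  also have "\<dots> < ninv n (g \<circ> ?t)" unfolding ninv_def
    using pqin finite_invs by (metis card_Diff1_less)
  finally show ?thesis .
qed

lemma tr_mono:
  assumes "\<not> ({a, b} = {k, Suc k})" "transpose k (Suc k) b < transpose k (Suc k) a"
  shows "b < a"
  using assms unfolding transpose_def doubleton_eq_iff by (auto split: if_splits)

lemma adj_ub:
  assumes g: "g permutes {1..n}"
  shows "ninv n (transpose k (Suc k) \<circ> g) \<le> ninv n g + 1"
proof -
  define P where "P = inv g k"
  define Q where "Q = inv g (Suc k)"
  have gP: "g P = k" and gQ: "g Q = Suc k" unfolding P_def Q_def using g by (auto simp: permutes_inverses)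
  have inj: "inj g" using g by (rule permutes_inj)
  have sub: "invs n (transpose k (Suc k) \<circ> g) \<subseteq> insert (min P Q, max P Q) (invs n g)"
  proof
    fix v assume v: "v \<in> invs n (transpose k (Suc k) \<circ> g)"
    then obtain i j where vij: "v = (i,j)" by (cases v)
    show "v \<in> insert (min P Q, max P Q) (invs n g)"
    proof (cases "{g i, g j} = {k, Suc k}")
      case True
      then have "(g i = k \<and> g j = Suc k) \<or> (g i = Suc k \<and> g j = k)"
        by (simp add: doubleton_eq_iff)
      moreover have "i = inv g (g i)" "j = inv g (g j)" using g by (simp_all add: permutes_inverses)
      ultimately have "(i = P \<and> j = Q) \<or> (i = Q \<and> j = P)"
        unfolding P_def Q_def by metis
      moreover have "i < j" using v vij by (auto simp: invs_def)
      ultimately show ?thesis using vij by auto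
    next
      case False
      moreover have "transpose k (Suc k) (g j) < transpose k (Suc k) (g i)" using v vij by (simp add: invs_def)
      ultimately have "g j < g i" by (rule tr_mono)
      then show ?thesis using v vij by (simp add: invs_def)
    qed
  qed
  have "ninv n (transpose k (Suc k) \<circ> g) \<le> card (insert (min P Q, max P Q) (invs n g))"
    unfolding ninv_def by (rule card_mono) (simp_all add: finite_invs sub)
  also have "\<dots> \<le> ninv n g + 1" unfolding ninv_def by (simp add: card_insert_if finite_invs)
  finally show ?thesis .
qed

definition W :: "nat list \<Rightarrow> nat \<Rightarrow> nat" where
  "W ws = foldr (\<lambda>i f. transpose i (Suc i) \<circ> f) ws id"

lemma W_Cons: "W (i # ws) = transpose i (Suc i) \<circ> W ws" by (simp add: W_def)
lemma W_Nil: "W [] = id" by (simp add: W_def)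

lemma ninv_id: "ninv n id = 0"
proof -
  have "invs n id = {}" by (auto simp: invs_def)
  then show ?thesis by (simp add: ninv_def)
qed

lemma W_props: "set ws \<subseteq> {1..<n} \<Longrightarrow> W ws permutes {1..n} \<and> ninv n (W ws) \<le> length ws"
proof (induction ws)
  case Nil then show ?case by (simp only: W_Nil ninv_id permutes_id list.size simp_thms order_refl)
next
  case (Cons i ws)
  then have IH: "W ws permutes {1..n}" "ninv n (W ws) \<le> length ws" and i: "1 \<le> i" "i < n" by auto
  have "transpose i (Suc i) permutes {1..n}" using i by (intro permutes_swap_id) auto
  then have "W (i # ws) permutes {1..n}" unfolding W_Cons using IH(1) by (rule permutes_compose[rotated])
  moreover have "ninv n (W (i#ws)) \<le> length (i # ws)"
    unfolding W_Cons using adj_ub[OF IH(1), of i] IH(2) by simp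
  ultimately show ?case by simp
qed

lemma incr_id:
  assumes "\<And>k. 1 \<le> k \<Longrightarrow> k < n \<Longrightarrow> h k < h (Suc k)"
    and "\<And>k. k \<in> {1..n} \<Longrightarrow> h k \<in> {1..n}"
  shows "k \<in> {1..n} \<Longrightarrow> h k = k"
proof -
  have lo: "k \<in> {1..n} \<Longrightarrow> k \<le> h k" for k
  proof (induction k)
    case 0 then show ?case by simp
  next
    case (Suc k)
    show ?case
    proof (cases "k = 0")
      case True then show ?thesis using assms(2)[of 1] Suc by auto
    next
      case False then have "k \<le> h k" using Suc by auto
      moreover have "h k < h (Suc k)" using assms(1)[of k] Suc False by auto
      ultimately show ?thesis by simp
    qed
  qed
  have hi: "n - d \<in> {1..n} \<Longrightarrow> h (n - d) \<le> n - d" for d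
  proof (induction d)
    case 0 then show ?case using assms(2)[of n] by auto
  next
    case (Suc d)
    show ?case
    proof (cases "n - d \<in> {1..n}")
      case True
      have "h (n - Suc d) < h (Suc (n - Suc d))" using assms(1)[of "n - Suc d"] Suc True by auto
      moreover have "Suc (n - Suc d) = n - d" using Suc True by auto
      ultimately show ?thesis using Suc.IH True by auto
    next
      case False then show ?thesis using Suc by auto
    qed
  qed
  assume k: "k \<in> {1..n}"
  have "h (n - (n - k)) \<le> n - (n - k)" using hi[of "n - k"] k by auto
  then show "h k = k" using lo[OF k] k by auto
qed

lemma descent:
  assumes g: "g permutes {1..n}" and ne: "g \<noteq> id"
  shows "\<exists>k. 1 \<le> k \<and> k < n \<and> inv g (Suc k) < inv g k"
proof (rule ccontr)
  assume "\<not> ?thesis"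
  then have A: "\<And>k. 1 \<le> k \<Longrightarrow> k < n \<Longrightarrow> inv g k \<le> inv g (Suc k)" by (auto simp: not_less)
  have gi: "inv g permutes {1..n}" using g by (rule permutes_inv)
  have ii: "inj (inv g)" using gi by (rule permutes_inj)
  have B: "\<And>k. 1 \<le> k \<Longrightarrow> k < n \<Longrightarrow> inv g k < inv g (Suc k)"
    using A ii by (metis injD le_neq_implies_less n_not_Suc_n)
  have C: "\<And>k. k \<in> {1..n} \<Longrightarrow> inv g k \<in> {1..n}" using permutes_in_image[OF gi] by blast
  have "\<And>k. inv g k = k"
  proof -
    fix k show "inv g k = k"
      using incr_id[of n "inv g", OF B C] permutes_not_in[OF gi, of k] by blast
  qed
  then have "inv g = id" by auto
  then have "g = id" using g by (metis inv_id permutes_inv_inv)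
  with ne show False by simp
qed


lemma dec_lemma:
  assumes g: "g permutes {1..n}" and k: "1 \<le> k" "k < n" and d: "inv g (Suc k) < inv g k"
  shows "ninv n (transpose k (Suc k) \<circ> g) < ninv n g"
proof -
  define P where "P = inv g (Suc k)"
  define Q where "Q = inv g k"
  have gi: "inv g permutes {1..n}" using g by (rule permutes_inv)
  have PQ: "P \<in> {1..n}" "Q \<in> {1..n}" unfolding P_def Q_def using k permutes_in_image[OF gi] by auto
  have gP: "g P = Suc k" and gQ: "g Q = k" unfolding P_def Q_def using g by (auto simp: permutes_inverses)
  have inj: "inj g" using g by (rule permutes_inj)
  define g' where "g' = transpose k (Suc k) \<circ> g"
  have g'p: "g' permutes {1..n}" unfolding g'_def using k g by (intro permutes_compose permutes_swap_id) auto
  have lt: "g' P < g' Q" unfolding g'_def using gP gQ by simp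
  have gback: "g' \<circ> transpose P Q = g"
  proof
    fix m
    show "(g' \<circ> transpose P Q) m = g m"
    proof (cases "m = P \<or> m = Q")
      case True then show ?thesis unfolding g'_def using gP gQ by auto
    next
      case False
      then have "g m \<noteq> k" "g m \<noteq> Suc k" using gP gQ inj by (metis injD)+
      then show ?thesis unfolding g'_def using False by simp
    qed
  qed
  have "ninv n g' < ninv n (g' \<circ> transpose P Q)"
    by (rule gen_swap[OF g'p]) (use PQ d lt in \<open>auto simp: P_def Q_def\<close>)
  then show ?thesis using gback unfolding g'_def by simp
qed

lemma ex_word:
  "g permutes {1..n} \<Longrightarrow> \<exists>ws. set ws \<subseteq> {1..<n} \<and> length ws \<le> ninv n g \<and> g = W ws"
proof (induction "ninv n g" arbitrary: g rule: less_induct)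
  case less
  show ?case
  proof (cases "g = id")
    case True then show ?thesis by (intro exI[of _ "[]"]) (simp add: W_Nil)
  next
    case False
    then obtain k where k: "1 \<le> k" "k < n" "inv g (Suc k) < inv g k" using descent less.prems by blast
    define g' where "g' = transpose k (Suc k) \<circ> g"
    have g'p: "g' permutes {1..n}" unfolding g'_def using k less.prems by (intro permutes_compose permutes_swap_id) auto
    have lt: "ninv n g' < ninv n g" unfolding g'_def by (rule dec_lemma[OF less.prems k])
    obtain ws where ws: "set ws \<subseteq> {1..<n}" "length ws \<le> ninv n g'" "g' = W ws"
      using less.hyps[OF lt g'p] by blast
    have "g = transpose k (Suc k) \<circ> g'" unfolding g'_def by (simp add: fun_eq_iff)
    then have "g = W (k # ws)" using ws by (simp add: W_Cons)
    then show ?thesis using ws k lt by (intro exI[of _ "k # ws"]) auto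
  qed
qed

lemma coxlen_eq:
  assumes g: "g permutes {1..n}"
  shows "coxlen n g = ninv n g"
proof -
  have cf: "coxlen n g = (LEAST k. \<exists>ws. length ws = k \<and> set ws \<subseteq> {1..<n} \<and> g = W ws)"
    unfolding coxlen_def W_def ..
  obtain ws where ws: "set ws \<subseteq> {1..<n}" "length ws \<le> ninv n g" "g = W ws" using ex_word[OF g] by blast
  have "ninv n g \<le> length ws" using W_props[OF ws(1)] ws(3) by simp
  then have ex: "\<exists>ws. length ws = ninv n g \<and> set ws \<subseteq> {1..<n} \<and> g = W ws" using ws by auto
  show ?thesis unfolding cf
  proof (rule Least_equality)
    show "\<exists>ws. length ws = ninv n g \<and> set ws \<subseteq> {1..<n} \<and> g = W ws" by (rule ex)
  next
    fix k assume "\<exists>ws. length ws = k \<and> set ws \<subseteq> {1..<n} \<and> g = W ws"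
    then obtain vs where "length vs = k" "set vs \<subseteq> {1..<n}" "g = W vs" by blast
    then show "ninv n g \<le> k" using W_props[of vs n] by auto
  qed
qed


definition sedge :: "nat \<Rightarrow> (nat \<Rightarrow> nat) \<Rightarrow> (nat \<Rightarrow> nat) \<Rightarrow> bool" where
  "sedge n x y \<longleftrightarrow> (\<exists>p q. 1 \<le> p \<and> p < q \<and> q \<le> n \<and> x p < x q \<and> y = x \<circ> transpose p q)"

lemma bedge'_iff: "bedge' n x y \<longleftrightarrow> x \<in> Sym n \<and> sedge n x y"
proof
  assume "bedge' n x y"
  then obtain t where b: "bedge n x t y" unfolding bedge'_def by blast
  then have xS: "x permutes {1..n}" and yS: "y permutes {1..n}" and tT: "t \<in> Transp n"
    and yt: "y \<circ> inv x = t" and cl: "coxlen n x < coxlen n y"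
    unfolding bedge_def Sym_def by auto
  from tT obtain a b where ab: "t = transpose a b" "a \<in> {1..n}" "b \<in> {1..n}" "a \<noteq> b"
    unfolding Transp_def by blast
  have "y = y \<circ> (inv x \<circ> x)" using permutes_inv_o(2)[OF xS] by simp
  also have "\<dots> = t \<circ> x" using yt by (simp add: o_assoc)
  also have "\<dots> = x \<circ> transpose (inv x a) (inv x b)" unfolding ab(1)
    by (rule transpose_comp_eq) (rule permutes_bij[OF xS])
  finally have y1: "y = x \<circ> transpose (inv x a) (inv x b)" .
  have xi: "inv x permutes {1..n}" using xS by (rule permutes_inv)
  have AB: "inv x a \<in> {1..n}" "inv x b \<in> {1..n}" "inv x a \<noteq> inv x b"
    using ab permutes_in_image[OF xi] permutes_inj[OF xi] by (auto dest: injD)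
  obtain p q where pq: "p < q" "p \<in> {1..n}" "q \<in> {1..n}" "y = x \<circ> transpose p q"
  proof (cases "inv x a < inv x b")
    case True then show ?thesis using that AB y1 by blast
  next
    case False then have "inv x b < inv x a" using AB by auto
    then show ?thesis using that AB y1 by (metis transpose_commute)
  qed
  have inj: "inj x" using xS by (rule permutes_inj)
  have "x p < x q"
  proof (rule ccontr)
    assume "\<not> x p < x q"
    moreover have "x p \<noteq> x q" using pq inj by (metis injD less_irrefl)
    ultimately have "y p < y q" using pq by auto
    then have "ninv n y < ninv n (y \<circ> transpose p q)"
      using pq by (intro gen_swap[OF yS]) auto
    also have "y \<circ> transpose p q = x" using pq by (simp add: fun_eq_iff)
    finally show False using cl coxlen_eq[OF xS] coxlen_eq[OF yS] by simp
  qed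
  then show "x \<in> Sym n \<and> sedge n x y" using pq xS unfolding sedge_def Sym_def by auto
next
  assume "x \<in> Sym n \<and> sedge n x y"
  then obtain p q where xS: "x permutes {1..n}" and pq: "1 \<le> p" "p < q" "q \<le> n" "x p < x q" "y = x \<circ> transpose p q"
    unfolding sedge_def Sym_def by blast
  have yS: "y permutes {1..n}" unfolding pq(5) by (rule permutes_compose[OF permutes_swap_id xS]) (use pq in auto)
  define t where "t = transpose (x p) (x q)"
  have "t \<circ> x = x \<circ> transpose (inv x (x p)) (inv x (x q))" unfolding t_def
    by (rule transpose_comp_eq) (rule permutes_bij[OF xS])
  then have tx: "t \<circ> x = y" using pq permutes_inverses[OF xS] by simp
  have "y \<circ> inv x = t"
  proof -
    have "y \<circ> inv x = (t \<circ> x) \<circ> inv x" using tx by simp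
    also have "\<dots> = t \<circ> (x \<circ> inv x)" by (rule comp_assoc)
    also have "\<dots> = t" using permutes_inv_o(1)[OF xS] by simp
    finally show ?thesis .
  qed
  moreover have "t \<in> Transp n"
  proof -
    have "x p \<in> {1..n}" using permutes_in_image[OF xS, of p] pq(1,2,3) by simp
    moreover have "x q \<in> {1..n}" using permutes_in_image[OF xS, of q] pq(1,2,3) by simp
    moreover have "x p \<noteq> x q" using pq(4) by simp
    ultimately show ?thesis unfolding t_def Transp_def mem_Collect_eq
      by (intro exI[of _ "x p"] exI[of _ "x q"]) simp
  qed
  moreover have "coxlen n x < coxlen n y"
    using gen_swap[OF xS pq(1-4)] pq(5) coxlen_eq[OF xS] coxlen_eq[OF yS] by simp
  ultimately show "bedge' n x y" unfolding bedge'_def bedge_def Sym_def using xS yS by blast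
qed

lemma comb:
  fixes X :: "nat \<Rightarrow> nat"
  assumes pq: "p < q" "p' < q'" "\<not> (p = p' \<and> q = q')"
    and inj: "\<And>a b. a \<in> {p,q,p',q'} \<Longrightarrow> b \<in> {p,q,p',q'} \<Longrightarrow> X a = X b \<Longrightarrow> a = b"
    and h1: "X p < X q" and h2: "X (transpose p q p') < X (transpose p q q')"
  shows "(p \<noteq> p' \<and> p \<noteq> q' \<and> q \<noteq> p' \<and> q \<noteq> q' \<longrightarrow> (X p' < X q' \<and> transpose p' q' p < transpose p' q' q)) \<and>
         (\<not> (p \<noteq> p' \<and> p \<noteq> q' \<and> q \<noteq> p' \<and> q \<noteq> q') \<longrightarrow> ((X p' < X q' \<and> transpose p' q' p < transpose p' q' q) \<or> (transpose p q p' < transpose p q q' \<and> X (transpose p q (transpose p' q' q)) < X (transpose p q (transpose p' q' p)))) \<and> \<not> ((X p' < X q' \<and> transpose p' q' p < transpose p' q' q) \<and> (transpose p q p' < transpose p q q' \<and> X (transpose p q (transpose p' q' q)) < X (transpose p q (transpose p' q' p)))))"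
proof -
  have i1: "X a \<noteq> X b" if "a \<in> {p,q,p',q'}" "b \<in> {p,q,p',q'}" "a \<noteq> b" for a b
    using inj that by blast
  show ?thesis
  proof (cases "p = p'")
    case True
    then have "q \<noteq> q'" using pq by auto
    then show ?thesis using True pq h1 h2 i1[of q q'] i1[of p q'] by (auto simp: transpose_def)
  next
    case F1: False
    show ?thesis
    proof (cases "q = q'")
      case True
      then show ?thesis using F1 pq h1 h2 i1[of p p'] i1[of p' q] by (auto simp: transpose_def)
    next
      case F2: False
      show ?thesis
      proof (cases "p = q'")
        case True
        then show ?thesis using F1 F2 pq h1 h2 i1[of p' q] i1[of p' p] i1[of p q] by (auto simp: transpose_def)
      next
        case F3: False
        show ?thesis
        proof (cases "q = p'")
          case True
          then show ?thesis using F1 F2 F3 pq h1 h2 i1[of p q'] i1[of q q'] by (auto simp: transpose_def)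
        next
          case F4: False
          then show ?thesis using F1 F2 F3 pq h1 h2 by (auto simp: transpose_def)
        qed
      qed
    qed
  qed
qed

lemma transp_eq:
  fixes a b r s :: nat
  assumes "a < b" "r < s" "transpose a b = transpose r s"
  shows "a = r \<and> b = s"
proof -
  have "transpose r s a = b" "transpose r s b = a" using assms(3) by (metis transpose_apply_first transpose_apply_second)+
  then show ?thesis using assms(1,2) by (auto simp: transpose_eq_iff)
qed


lemma mixed:
  fixes p q p' q' a b r' s' :: nat
  assumes d: "distinct [p,q,p',q']" and a: "a = p \<or> a = q" and b: "b = p' \<or> b = q'"
    and Ep: "\<And>m. transpose p q (transpose p' q' m) = transpose a b (transpose r' s' m)"
  shows False
proof -
  define as where "as = transpose p q a"
  define bs where "bs = transpose p' q' b"
  have f1: "as \<noteq> a" "as \<noteq> b" "as = p \<or> as = q" unfolding as_def using a b d by auto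
  have f2: "bs \<noteq> a" "bs \<noteq> b" "bs = p' \<or> bs = q'" unfolding bs_def using a b d by auto
  have "transpose p' q' a = a" using a d by auto
  then have "transpose a b (transpose r' s' a) = as" using Ep[of a] unfolding as_def by simp
  then have ra: "transpose r' s' a = as" using f1 by (metis transpose_apply_other transpose_involutory)
  have "transpose p q (transpose p' q' b) = bs" using b d unfolding bs_def by auto
  then have "transpose a b (transpose r' s' b) = bs" using Ep[of b] by simp
  then have rb: "transpose r' s' b = bs" using f2 by (metis transpose_apply_other transpose_involutory)
  have "a \<in> {r', s'}" using ra f1 by (metis insertCI transpose_apply_other)
  moreover have "as \<in> {r', s'}" using ra f1 by (metis insertCI transpose_apply_other transpose_involutory)
  moreover have "b \<in> {r', s'}" using rb f2 by (metis insertCI transpose_apply_other)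
  moreover have "a \<noteq> b" using a b d by auto
  ultimately show False using f1 by auto
qed

lemma fact2:
  fixes p q p' q' r s r' s' :: nat
  assumes pq: "p < q" "p' < q'" "\<not> (p = p' \<and> q = q')" "r \<noteq> s" "r' \<noteq> s'"
    and E: "transpose p q \<circ> transpose p' q' = transpose r s \<circ> transpose r' s'"
  shows "transpose r s = transpose p q \<or> transpose r s = transpose p' q' \<or>
         transpose r s = transpose (transpose p q p') (transpose p q q')"
proof -
  have Ep: "transpose p q (transpose p' q' m) = transpose r s (transpose r' s' m)" for m
    using E by (metis comp_apply)
  have nid: "transpose r s \<noteq> transpose r' s'"
  proof
    assume "transpose r s = transpose r' s'"
    then have "transpose p q \<circ> transpose p' q' = id" using E by simp
    then have "transpose p q = transpose p' q'"
      by (metis comp_id fun.map_comp transpose_comp_involutory)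
    then show False using transp_eq[OF pq(1,2)] pq(3) by blast
  qed
  have moved: "transpose r s (transpose r' s' m) \<noteq> m" if "m = r \<or> m = s" for m
  proof
    assume a: "transpose r s (transpose r' s' m) = m"
    have "transpose r' s' m = transpose r s m" using a by (metis transpose_involutory)
    then have "transpose r' s' = transpose r s"
      using that pq(4,5) by (auto simp: transpose_eq_iff fun_eq_iff transpose_def split: if_splits)
    then show False using nid by simp
  qed
  have rin: "r \<in> {p,q,p',q'}"
  proof (rule ccontr)
    assume "r \<notin> {p,q,p',q'}"
    then have "transpose p q (transpose p' q' r) = r" by simp
    then show False using moved[of r] Ep[of r] by simp
  qed
  have sin: "s \<in> {p,q,p',q'}"
  proof (rule ccontr)
    assume "s \<notin> {p,q,p',q'}"
    then have "transpose p q (transpose p' q' s) = s" by simp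
    then show False using moved[of s] Ep[of s] by simp
  qed
  show ?thesis
  proof (cases "p \<noteq> p' \<and> p \<noteq> q' \<and> q \<noteq> p' \<and> q \<noteq> q'")
    case True
    then have d: "distinct [p,q,p',q']" using pq by auto
    have Ep': "transpose p q (transpose p' q' m) = transpose s r (transpose r' s' m)" for m
      using Ep by (simp add: transpose_commute)
    have "\<not> ((r = p \<or> r = q) \<and> (s = p' \<or> s = q'))" using mixed[OF d _ _ Ep] by blast
    moreover have "\<not> ((s = p \<or> s = q) \<and> (r = p' \<or> r = q'))" using mixed[OF d _ _ Ep'] by blast
    ultimately have "(r = p \<and> s = q) \<or> (r = q \<and> s = p) \<or> (r = p' \<and> s = q') \<or> (r = q' \<and> s = p')"
      using rin sin pq(4) by auto
    then show ?thesis by (auto simp: transpose_commute)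
  next
    case False
    then have "p = p' \<or> q = q' \<or> p = q' \<or> q = p'" by blast
    then show ?thesis
    proof (elim disjE)
      assume h: "p = p'"
      then have "q \<noteq> q'" "p \<noteq> q'" using pq by auto
      then show ?thesis using h rin sin pq(4) by (auto simp: transpose_commute)
    next
      assume h: "q = q'"
      then have "p \<noteq> p'" "q \<noteq> p'" using pq by auto
      then show ?thesis using h rin sin pq(4) by (auto simp: transpose_commute)
    next
      assume h: "p = q'"
      then have "q \<noteq> p'" "p \<noteq> p'" "q \<noteq> q'" using pq by auto
      then show ?thesis using h rin sin pq(4) by (auto simp: transpose_commute)
    next
      assume h: "q = p'"
      then have "q \<noteq> q'" "p \<noteq> p'" "p \<noteq> q'" using pq by auto
      then show ?thesis using h rin sin pq(4) by (auto simp: transpose_commute)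
    qed
  qed
qed


lemma comp_cancel: "inj x \<Longrightarrow> x \<circ> f = x \<circ> g \<Longrightarrow> f = g"
  by (rule ext) (metis comp_apply injD)

lemma sedge_tr:
  assumes x: "x permutes {1..n}" and ab: "a \<noteq> b"
  shows "sedge n x (x \<circ> transpose a b) \<longleftrightarrow> a \<in> {1..n} \<and> b \<in> {1..n} \<and> (a < b \<longleftrightarrow> x a < x b)"
proof
  assume "sedge n x (x \<circ> transpose a b)"
  then obtain p q where pq: "1 \<le> p" "p < q" "q \<le> n" "x p < x q" "x \<circ> transpose a b = x \<circ> transpose p q"
    unfolding sedge_def by blast
  have t: "transpose a b = transpose p q" using comp_cancel[OF permutes_inj[OF x] pq(5)] .
  show "a \<in> {1..n} \<and> b \<in> {1..n} \<and> (a < b \<longleftrightarrow> x a < x b)"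
  proof (cases "a < b")
    case True
    then have "a = p \<and> b = q" using transp_eq[OF True pq(2) t] by blast
    then show ?thesis using pq True by auto
  next
    case False
    then have ba: "b < a" using ab by auto
    have "transpose b a = transpose p q" using t by (simp add: transpose_commute)
    then have "b = p \<and> a = q" using transp_eq[OF ba pq(2)] by blast
    then show ?thesis using pq False by auto
  qed
next
  assume h: "a \<in> {1..n} \<and> b \<in> {1..n} \<and> (a < b \<longleftrightarrow> x a < x b)"
  have xab: "x a \<noteq> x b" using ab permutes_inj[OF x] by (metis injD)
  show "sedge n x (x \<circ> transpose a b)"
  proof (cases "a < b")
    case True then show ?thesis using h unfolding sedge_def by (intro exI[of _ a] exI[of _ b]) auto
  next
    case False
    then have "b < a" "x b < x a" using h ab xab by auto
    then show ?thesis using h unfolding sedge_def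
      by (intro exI[of _ b] exI[of _ a]) (auto simp: transpose_commute)
  qed
qed

lemma two_paths:
  assumes xS: "x permutes {1..n}" and xy: "sedge n x y" and yz: "sedge n y z"
  shows "\<exists>!y'. y' \<noteq> y \<and> sedge n x y' \<and> sedge n y' z"
proof -
  obtain p q where P: "1 \<le> p" "p < q" "q \<le> n" "x p < x q" "y = x \<circ> transpose p q"
    using xy unfolding sedge_def by blast
  obtain p' q' where P': "1 \<le> p'" "p' < q'" "q' \<le> n" "y p' < y q'" "z = y \<circ> transpose p' q'"
    using yz unfolding sedge_def by blast
  define t1 where "t1 = transpose p q"
  define t2 where "t2 = transpose p' q'"
  have injx: "inj x" using xS by (rule permutes_inj)
  have h2: "x (t1 p') < x (t1 q')" using P'(4) P(5) unfolding t1_def by simp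
  have ne: "\<not> (p = p' \<and> q = q')"
  proof
    assume "p = p' \<and> q = q'"
    then show False using h2 P(4) unfolding t1_def by simp
  qed
  have t12: "t1 \<noteq> t2" unfolding t1_def t2_def using transp_eq[OF P(2) P'(2)] ne by blast
  have zx: "z = x \<circ> (t1 \<circ> t2)" using P(5) P'(5) unfolding t1_def t2_def by (simp add: fun_eq_iff)
  define yA where "yA = x \<circ> t2"
  define yB where "yB = x \<circ> transpose (t1 p') (t1 q')"
  have zA: "z = yA \<circ> transpose (t2 p) (t2 q)"
  proof -
    have "t1 \<circ> t2 = t2 \<circ> transpose (inv t2 p) (inv t2 q)" unfolding t1_def
      by (rule transpose_comp_eq) (simp add: t2_def)
    then have e: "t1 \<circ> t2 = t2 \<circ> transpose (t2 p) (t2 q)" by (simp add: t2_def)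
    show ?thesis unfolding zx yA_def comp_assoc e ..
  qed
  have zB: "z = yB \<circ> t1"
  proof -
    have "transpose (t1 p') (t1 q') \<circ> t1 = t1 \<circ> transpose (inv t1 (t1 p')) (inv t1 (t1 q'))"
      by (rule transpose_comp_eq) (simp add: t1_def)
    then have "transpose (t1 p') (t1 q') \<circ> t1 = t1 \<circ> t2" by (simp add: t1_def t2_def)
    then have "yB \<circ> t1 = x \<circ> (t1 \<circ> t2)" unfolding yB_def by (simp only: comp_assoc)
    then show ?thesis using zx by simp
  qed
  have yBz: "yB = z \<circ> t1" unfolding zB by (simp add: fun_eq_iff t1_def)
  have yAS: "yA permutes {1..n}" unfolding yA_def t2_def
    by (rule permutes_compose[OF permutes_swap_id xS]) (use P' in auto)
  have rng: "t2 p \<in> {1..n}" "t2 q \<in> {1..n}" "t1 p' \<in> {1..n}" "t1 q' \<in> {1..n}"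
    using P(1,2,3) P'(1,2,3) unfolding t1_def t2_def by (auto simp: transpose_def)
  have yBS: "yB permutes {1..n}" unfolding yB_def
    by (rule permutes_compose[OF permutes_swap_id xS]) (use rng in auto)
  have t2ne: "t2 p \<noteq> t2 q" unfolding t2_def using P(2) by (metis less_irrefl transpose_involutory)
  have t1ne: "t1 p' \<noteq> t1 q'" unfolding t1_def using P'(2) by (metis less_irrefl transpose_involutory)
  define vA where "vA \<equiv> x p' < x q' \<and> transpose p' q' p < transpose p' q' q"
  define vB where "vB \<equiv> transpose p q p' < transpose p q q' \<and>
       x (transpose p q (transpose p' q' q)) < x (transpose p q (transpose p' q' p))"
  have validA: "sedge n x yA \<and> sedge n yA z \<longleftrightarrow> vA"
  proof -
    have "sedge n x yA \<longleftrightarrow> x p' < x q'" unfolding yA_def t2_def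
      using sedge_tr[OF xS, of p' q'] P' by auto
    moreover have "sedge n yA z \<longleftrightarrow> t2 p < t2 q" unfolding zA
      using sedge_tr[OF yAS t2ne] rng P(4) unfolding yA_def by (auto simp: t2_def)
    ultimately show ?thesis unfolding vA_def t2_def by blast
  qed
  have validB: "sedge n x yB \<and> sedge n yB z \<longleftrightarrow> vB"
  proof -
    have "sedge n x yB \<longleftrightarrow> t1 p' < t1 q'" unfolding yB_def
      using sedge_tr[OF xS t1ne] rng h2 by auto
    moreover have "sedge n yB z \<longleftrightarrow> yB p < yB q" unfolding zB
      using sedge_tr[OF yBS, of p q] P unfolding t1_def by auto
    moreover have "yB p = x (transpose p q (transpose p' q' q))" "yB q = x (transpose p q (transpose p' q' p))"
      unfolding yBz zx t1_def t2_def by simp_all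
    ultimately show ?thesis unfolding vB_def t1_def by simp
  qed
  have injp: "\<And>a b. a \<in> {p,q,p',q'} \<Longrightarrow> b \<in> {p,q,p',q'} \<Longrightarrow> x a = x b \<Longrightarrow> a = b"
    using injx unfolding inj_def by blast
  have cmb: "(p \<noteq> p' \<and> p \<noteq> q' \<and> q \<noteq> p' \<and> q \<noteq> q' \<longrightarrow> vA) \<and>
         (\<not> (p \<noteq> p' \<and> p \<noteq> q' \<and> q \<noteq> p' \<and> q \<noteq> q') \<longrightarrow> (vA \<or> vB) \<and> \<not> (vA \<and> vB))"
    unfolding vA_def vB_def by (rule comb[OF P(2) P'(2) ne injp P(4) h2[unfolded t1_def]])
  have cands: "y1 = y \<or> y1 = yA \<or> y1 = yB" if c1: "sedge n x y1" and c2: "sedge n y1 z" for y1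
  proof -
    obtain r s where R: "r < s" "y1 = x \<circ> transpose r s" using c1 unfolding sedge_def by blast
    obtain r' s' where R': "r' < s'" "z = y1 \<circ> transpose r' s'" using c2 unfolding sedge_def by blast
    have "x \<circ> (t1 \<circ> t2) = (x \<circ> transpose r s) \<circ> transpose r' s'" using zx R(2) R'(2) by metis
    then have "x \<circ> (t1 \<circ> t2) = x \<circ> (transpose r s \<circ> transpose r' s')" by (simp only: comp_assoc)
    then have "t1 \<circ> t2 = transpose r s \<circ> transpose r' s'" by (rule comp_cancel[OF injx])
    then have "transpose r s = transpose p q \<or> transpose r s = transpose p' q' \<or>
         transpose r s = transpose (transpose p q p') (transpose p q q')"
      unfolding t1_def t2_def by (intro fact2[OF P(2) P'(2) ne]) (use R R' in auto)
    then show ?thesis unfolding yA_def yB_def R(2) P(5) t1_def t2_def by auto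
  qed
  have yAy: "yA \<noteq> y"
  proof
    assume "yA = y"
    then have "x \<circ> t2 = x \<circ> t1" unfolding yA_def P(5) t1_def .
    then have "t2 = t1" by (rule comp_cancel[OF injx])
    then show False using t12 by simp
  qed
  have yBy: "yB \<noteq> y"
  proof
    assume "yB = y"
    then have "z \<circ> t1 = x \<circ> t1" unfolding yBz P(5) t1_def .
    then have "z \<circ> t1 \<circ> t1 = x \<circ> t1 \<circ> t1" by simp
    then have "z \<circ> (t1 \<circ> t1) = x \<circ> (t1 \<circ> t1)" by (simp only: comp_assoc)
    then have "z = x" by (simp add: t1_def)
    then have "x \<circ> (t1 \<circ> t2) = x \<circ> id" using zx by simp
    then have "t1 \<circ> t2 = id" by (rule comp_cancel[OF injx])
    then have "t1 = t2" unfolding t1_def t2_def by (metis comp_id fun.map_comp transpose_comp_involutory)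
    then show False using t12 by simp
  qed
  show ?thesis
  proof (cases "p \<noteq> p' \<and> p \<noteq> q' \<and> q \<noteq> p' \<and> q \<noteq> q'")
    case True
    then have vA using cmb by blast
    have AB: "yA = yB" unfolding yA_def yB_def t1_def t2_def using True by simp
    show ?thesis
    proof (rule ex_ex1I)
      show "\<exists>y'. y' \<noteq> y \<and> sedge n x y' \<and> sedge n y' z" using yAy validA \<open>vA\<close> by blast
    next
      fix y1 y2 assume "y1 \<noteq> y \<and> sedge n x y1 \<and> sedge n y1 z" "y2 \<noteq> y \<and> sedge n x y2 \<and> sedge n y2 z"
      then show "y1 = y2" using cands AB by metis
    qed
  next
    case False
    then have c: "vA \<or> vB" "\<not> (vA \<and> vB)" using cmb by blast+
    show ?thesis
    proof (rule ex_ex1I)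
      show "\<exists>y'. y' \<noteq> y \<and> sedge n x y' \<and> sedge n y' z" using yAy yBy validA validB c(1) by blast
    next
      fix y1 y2 assume a1: "y1 \<noteq> y \<and> sedge n x y1 \<and> sedge n y1 z" and a2: "y2 \<noteq> y \<and> sedge n x y2 \<and> sedge n y2 z"
      have "y1 = yA \<or> y1 = yB" "y2 = yA \<or> y2 = yB" using cands a1 a2 by blast+
      then show "y1 = y2" using a1 a2 validA validB c(2) by blast
    qed
  qed
qed


lemma sedge_Sym: "x \<in> Sym n \<Longrightarrow> sedge n x y \<Longrightarrow> y \<in> Sym n"
  unfolding sedge_def Sym_def by (auto intro!: permutes_compose[OF permutes_swap_id])

lemma bedge'_Sym: "bedge' n x y \<Longrightarrow> x \<in> Sym n \<and> y \<in> Sym n"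
  unfolding bedge'_def bedge_def by blast

lemma flip_mid_prop:
  assumes ab: "bedge' n a b" and bc: "bedge' n b c"
  shows "flip_mid n a b c \<noteq> b \<and> bedge' n a (flip_mid n a b c) \<and> bedge' n (flip_mid n a b c) c"
proof -
  have aS: "a \<in> Sym n" and sab: "sedge n a b" using ab bedge'_iff by blast+
  have bS: "b \<in> Sym n" and sbc: "sedge n b c" using bc bedge'_iff by blast+
  have "\<exists>!y'. y' \<noteq> b \<and> sedge n a y' \<and> sedge n y' c"
    using two_paths[OF aS[unfolded Sym_def mem_Collect_eq] sab sbc] .
  moreover have "(y' \<noteq> b \<and> bedge' n a y' \<and> bedge' n y' c) \<longleftrightarrow> (y' \<noteq> b \<and> sedge n a y' \<and> sedge n y' c)" for y'
    using bedge'_iff[of n a y'] bedge'_iff[of n y' c] aS sedge_Sym[OF aS, of y'] by blast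
  ultimately have "\<exists>!y'. y' \<noteq> b \<and> bedge' n a y' \<and> bedge' n y' c" by simp
  then show ?thesis unfolding flip_mid_def by (rule theI')
qed

lemma flip_path:
  assumes p: "p \<in> paths n h u v" and i: "i \<in> {1..h-1}"
  shows "flip_op n i p \<in> paths n h u v \<and> flip_op n i p ! i \<noteq> p ! i"
proof -
  have len: "length p = Suc h" and p0: "p ! 0 = u" and ph: "p ! h = v"
    and E: "\<And>j. j < h \<Longrightarrow> bedge' n (p ! j) (p ! Suc j)" using p unfolding paths_def by auto
  have i1: "1 \<le> i" "i < h" using i by auto
  define m where "m = flip_mid n (p ! (i - 1)) (p ! i) (p ! Suc i)"
  have e1: "bedge' n (p ! (i - 1)) (p ! i)" using E[of "i - 1"] i1 by simp
  have e2: "bedge' n (p ! i) (p ! Suc i)" using E[of i] i1 by simp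
  have M: "m \<noteq> p ! i" "bedge' n (p ! (i - 1)) m" "bedge' n m (p ! Suc i)"
    using flip_mid_prop[OF e1 e2] unfolding m_def by auto
  have fo: "flip_op n i p = p[i := m]" unfolding flip_op_def m_def ..
  have "\<forall>j<h. bedge' n (p[i := m] ! j) (p[i := m] ! Suc j)"
  proof (intro allI impI)
    fix j assume j: "j < h"
    consider "Suc j = i" | "j = i" | "Suc j \<noteq> i \<and> j \<noteq> i" by blast
    then show "bedge' n (p[i := m] ! j) (p[i := m] ! Suc j)"
    proof cases
      case 1
      then have "j = i - 1" by simp
      then show ?thesis using 1 M len i1 by simp
    next
      case 2 then show ?thesis using M len i1 by simp
    next
      case 3 then show ?thesis using E[OF j] len by simp
    qed
  qed
  then have "p[i := m] \<in> paths n h u v" unfolding paths_def using len p0 ph i1 by auto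
  moreover have "p[i := m] ! i = m" using len i1 by simp
  ultimately show ?thesis using fo M(1) by simp
qed

lemma flipclass_paths:
  assumes F: "F = {q. (flip_step n h)\<^sup>*\<^sup>* p q}" and p: "p \<in> paths n h u v"
  shows "q \<in> F \<Longrightarrow> q \<in> paths n h u v"
proof -
  assume "q \<in> F"
  then have "(flip_step n h)\<^sup>*\<^sup>* p q" using F by simp
  then show "q \<in> paths n h u v"
  proof (induction rule: rtranclp_induct)
    case base then show ?case using p .
  next
    case (step y z)
    then obtain i where "i \<in> {1..h-1}" "z = flip_op n i y" unfolding flip_step_def by blast
    then show ?case using flip_path[OF step.IH] by blast
  qed
qed

lemma flipclass_closed:
  assumes F: "F = {q. (flip_step n h)\<^sup>*\<^sup>* p q}" and q: "q \<in> F" and i: "i \<in> {1..h-1}"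
  shows "flip_op n i q \<in> F"
proof -
  have "flip_step n h q (flip_op n i q)" unfolding flip_step_def using i by blast
  then show ?thesis using q F by (auto intro: rtranclp.rtrancl_into_rtrancl)
qed

lemma finite_Sym: "finite (Sym n)"
  unfolding Sym_def by (rule finite_permutations) simp

theorem lemma5p3:
  fixes n h :: nat and u v :: "nat \<Rightarrow> nat"
    and F :: "(nat \<Rightarrow> nat) list set"
  assumes "u \<in> Sym n" and "v \<in> Sym n"
    and "F \<in> flipclasses n h u v"
  shows "(\<forall>x i. (x, i) \<in> TS_vertices h F \<and> i > 1 \<longrightarrow> TS_indeg h F (x, i) \<ge> 2) \<and>
         (\<forall>x i. (x, i) \<in> TS_vertices h F \<and> i < h - 1 \<longrightarrow> TS_outdeg h F (x, i) \<ge> 2)"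
proof -
  obtain p0 where Fd: "F = {q. (flip_step n h)\<^sup>*\<^sup>* p0 q}" and p0: "p0 \<in> paths n h u v"
    using assms(3) unfolding flipclasses_def by blast
  have FP: "\<And>q. q \<in> F \<Longrightarrow> q \<in> paths n h u v" using flipclass_paths[OF Fd p0] by blast
  have FC: "\<And>q i. q \<in> F \<Longrightarrow> i \<in> {1..h-1} \<Longrightarrow> flip_op n i q \<in> F" using flipclass_closed[OF Fd] by blast
  have FE: "\<And>q j. q \<in> F \<Longrightarrow> j < h \<Longrightarrow> bedge' n (q ! j) (q ! Suc j)" using FP unfolding paths_def by blast
  have FL: "\<And>q. q \<in> F \<Longrightarrow> length q = Suc h" using FP unfolding paths_def by blast
  have part1: "TS_indeg h F (x, i) \<ge> 2" if xi: "(x, i) \<in> TS_vertices h F" "i > 1" for x i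
  proof -
    obtain q where q: "q \<in> F" "q ! i = x" and ih: "i \<le> h" using xi unfolding TS_vertices_def by blast
    define j where "j = i - 1"
    have j: "j \<in> {1..h-1}" "Suc j = i" "j < h" using xi ih unfolding j_def by auto
    define q' where "q' = flip_op n j q"
    have q'F: "q' \<in> F" unfolding q'_def using FC[OF q(1) j(1)] .
    have q'j: "q' ! j \<noteq> q ! j" unfolding q'_def using flip_path[OF FP[OF q(1)] j(1)] by blast
    have q'i: "q' ! i = x" unfolding q'_def flip_op_def using q(2) j by simp
    define S where "S = {e \<in> TS_edges h F. snd (snd e) = (x, i)}"
    have e1: "((q ! j, j), x \<circ> inv (q ! j), (x, i)) \<in> S"
      unfolding S_def TS_edges_def using q j by fastforce
    have e2: "((q' ! j, j), x \<circ> inv (q' ! j), (x, i)) \<in> S"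
      unfolding S_def TS_edges_def using q'F q'i j by fastforce
    have sub: "S \<subseteq> (\<lambda>a. ((a, j), x \<circ> inv a, (x, i))) ` Sym n"
    proof
      fix e assume "e \<in> S"
      then obtain a k r where e: "e = ((a, k), x \<circ> inv a, (x, Suc k))" "k < h" "r \<in> F" "r ! k = a" "r ! Suc k = x"
        and ki: "Suc k = i"
        unfolding S_def TS_edges_def by auto
      have "a \<in> Sym n" using FE[OF e(3) e(2)] e(4) bedge'_Sym by blast
      moreover have "k = j" using ki j by simp
      ultimately show "e \<in> (\<lambda>a. ((a, j), x \<circ> inv a, (x, i))) ` Sym n" using e ki by auto
    qed
    have fin: "finite S" using finite_subset[OF sub] finite_Sym by blast
    have "card {((q ! j, j), x \<circ> inv (q ! j), (x, i)), ((q' ! j, j), x \<circ> inv (q' ! j), (x, i))} = 2"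
      using q'j by simp
    moreover have "card {((q ! j, j), x \<circ> inv (q ! j), (x, i)), ((q' ! j, j), x \<circ> inv (q' ! j), (x, i))} \<le> card S"
      using e1 e2 fin by (intro card_mono) auto
    ultimately show ?thesis unfolding TS_indeg_def S_def[symmetric] by simp
  qed
  have part2: "TS_outdeg h F (x, i) \<ge> 2" if xi: "(x, i) \<in> TS_vertices h F" "i < h - 1" for x i
  proof -
    obtain q where q: "q \<in> F" "q ! i = x" using xi unfolding TS_vertices_def by blast
    define j where "j = Suc i"
    have j: "j \<in> {1..h-1}" "j < h" "i < h" using xi unfolding j_def by auto
    define q' where "q' = flip_op n j q"
    have q'F: "q' \<in> F" unfolding q'_def using FC[OF q(1) j(1)] .
    have q'j: "q' ! j \<noteq> q ! j" unfolding q'_def using flip_path[OF FP[OF q(1)] j(1)] by blast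
    have q'i: "q' ! i = x" unfolding q'_def flip_op_def using q(2) j unfolding j_def by simp
    define S where "S = {e \<in> TS_edges h F. fst e = (x, i)}"
    have e1: "((x, i), q ! j \<circ> inv x, (q ! j, j)) \<in> S"
      unfolding S_def TS_edges_def j_def using q j unfolding j_def by fastforce
    have e2: "((x, i), q' ! j \<circ> inv x, (q' ! j, j)) \<in> S"
      unfolding S_def TS_edges_def j_def using q'F q'i j unfolding j_def by fastforce
    have sub: "S \<subseteq> (\<lambda>b. ((x, i), b \<circ> inv x, (b, j))) ` Sym n"
    proof
      fix e assume "e \<in> S"
      then obtain b k r where e: "e = ((x, k), b \<circ> inv x, (b, Suc k))" "k < h" "r \<in> F" "r ! k = x" "r ! Suc k = b"
        and ki: "k = i"
        unfolding S_def TS_edges_def by auto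
      have "b \<in> Sym n" using FE[OF e(3) e(2)] e(5) bedge'_Sym by blast
      then show "e \<in> (\<lambda>b. ((x, i), b \<circ> inv x, (b, j))) ` Sym n" using e ki unfolding j_def by auto
    qed
    have fin: "finite S" using finite_subset[OF sub] finite_Sym by blast
    have "card {((x, i), q ! j \<circ> inv x, (q ! j, j)), ((x, i), q' ! j \<circ> inv x, (q' ! j, j))} = 2"
      using q'j by simp
    moreover have "card {((x, i), q ! j \<circ> inv x, (q ! j, j)), ((x, i), q' ! j \<circ> inv x, (q' ! j, j))} \<le> card S"
      using e1 e2 fin by (intro card_mono) auto
    ultimately show ?thesis unfolding TS_outdeg_def S_def[symmetric] by simp
  qed
  show ?thesis using part1 part2 by blast
qed

end
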